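(* Let $(X,f)$ be a dynamical system with a full background measure $\mu_0$, and assume $(X,f)$ satisfies TRAC 1 and TRAC 2 (with ergodic measures $\mu_1,\dots,\mu_k$). If $B$ is a visible basic set, then there exists $i$ with $|\mu_i|\subset B$; in fact $\bigcup\{Gen(\mu_i):|\mu_i|\subset B\}$ intersects the basin $G(B)$ in a dense subset of $G(B)$. In particular, if $B$ is a terminal basic set then there exists $i$ with $|\mu_i|\subset B$.
   Context: $X$ compact metric, $f$ continuous. A background measure $\mu_0$ is a complete Borel probability measure which is full, i.e. every nonempty open set has positive measure. Basic sets are the chain components of $f$ (equivalence classes of chain recurrent points under mutual reachability by $\epsilon$-chains for all $\epsilon>0$); $B$ is terminal if every point chain-reachable from a point of $B$ lies in $B$. The basin of $B$ is $G(B)=\operatorname{int}\{x:\omega f(x)\subset B\}$, where $\omega f(x)$ is the limit set of the forward orbit; $B$ is visible if $G(B)\neq\emptyset$. $Gen(\mu)$ is the set of points $x$ with $\frac1n\sum_{i<n}u(f^ix)\to\int u\,d\mu$ for all continuous $u$; $|\mu|$ is the support. TRAC 1: there are only finitely many basic sets. TRAC 2: there are finitely many ergodic invariant probability measures $\mu_1,\dots,\mu_k$ such that every point outside some $\mu_0$-null set is generic for some $\mu_i$. *)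

theory Defs
  imports "HOL-Probability.Probability"
begin

definition eps_chain :: "('a::metric_space \<Rightarrow> 'a) \<Rightarrow> 'a set \<Rightarrow> real \<Rightarrow> 'a \<Rightarrow> 'a \<Rightarrow> bool" where
  "eps_chain f X e x y \<longleftrightarrow>
     (\<exists>n::nat. n \<ge> 1 \<and> (\<exists>p::nat \<Rightarrow> 'a. p 0 = x \<and> p n = y \<and> (\<forall>i\<le>n. p i \<in> X) \<and>
        (\<forall>i<n. dist (f (p i)) (p (Suc i)) < e)))"

definition chain_reach :: "('a::metric_space \<Rightarrow> 'a) \<Rightarrow> 'a set \<Rightarrow> 'a \<Rightarrow> 'a \<Rightarrow> bool" where
  "chain_reach f X x y \<longleftrightarrow> (\<forall>e>0. eps_chain f X e x y)"

definition chain_recurrent :: "('a::metric_space \<Rightarrow> 'a) \<Rightarrow> 'a set \<Rightarrow> 'a set" where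
  "chain_recurrent f X = {x \<in> X. chain_reach f X x x}"

definition basic_sets :: "('a::metric_space \<Rightarrow> 'a) \<Rightarrow> 'a set \<Rightarrow> 'a set set" where
  "basic_sets f X = {{y \<in> chain_recurrent f X. chain_reach f X x y \<and> chain_reach f X y x} | x. x \<in> chain_recurrent f X}"

definition terminal :: "('a::metric_space \<Rightarrow> 'a) \<Rightarrow> 'a set \<Rightarrow> 'a set \<Rightarrow> bool" where
  "terminal f X B \<longleftrightarrow> (\<forall>x\<in>B. \<forall>y. chain_reach f X x y \<longrightarrow> y \<in> B)"

definition omega_limit :: "('a::metric_space \<Rightarrow> 'a) \<Rightarrow> 'a \<Rightarrow> 'a set" where
  "omega_limit f x = {y. \<forall>e>0. \<forall>N. \<exists>n\<ge>N. dist ((f ^^ n) x) y < e}"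

definition basin :: "('a::metric_space \<Rightarrow> 'a) \<Rightarrow> 'a set \<Rightarrow> 'a set \<Rightarrow> 'a set" where
  "basin f X B = (top_of_set X) interior_of {x \<in> X. omega_limit f x \<subseteq> B}"

definition visible :: "('a::metric_space \<Rightarrow> 'a) \<Rightarrow> 'a set \<Rightarrow> 'a set \<Rightarrow> bool" where
  "visible f X B \<longleftrightarrow> basin f X B \<noteq> {}"

definition Gen :: "('a::metric_space \<Rightarrow> 'a) \<Rightarrow> 'a set \<Rightarrow> 'a measure \<Rightarrow> 'a set" where
  "Gen f X \<mu> = {x \<in> X. \<forall>u::'a \<Rightarrow> real. continuous_on X u \<longrightarrow>
      (\<lambda>n. (\<Sum>i<n. u ((f ^^ i) x)) / real n) \<longlonglongrightarrow> integral\<^sup>L \<mu> u}"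

definition supp :: "'a set \<Rightarrow> 'a::metric_space measure \<Rightarrow> 'a set" where
  "supp X \<mu> = {x \<in> X. \<forall>e>0. emeasure \<mu> (ball x e \<inter> X) > 0}"

definition borel_prob_on :: "'a::metric_space set \<Rightarrow> 'a measure \<Rightarrow> bool" where
  "borel_prob_on X \<mu> \<longleftrightarrow> prob_space \<mu> \<and> space \<mu> = X \<and> sets \<mu> = sets (restrict_space borel X)"

definition invariant_measure :: "('a::metric_space \<Rightarrow> 'a) \<Rightarrow> 'a set \<Rightarrow> 'a measure \<Rightarrow> bool" where
  "invariant_measure f X \<mu> \<longleftrightarrow> borel_prob_on X \<mu> \<and>
     (\<forall>A\<in>sets \<mu>. emeasure \<mu> (f -` A \<inter> X) = emeasure \<mu> A)"

definition ergodic_measure :: "('a::metric_space \<Rightarrow> 'a) \<Rightarrow> 'a set \<Rightarrow> 'a measure \<Rightarrow> bool" where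
  "ergodic_measure f X \<mu> \<longleftrightarrow> invariant_measure f X \<mu> \<and>
     (\<forall>A\<in>sets \<mu>. f -` A \<inter> X = A \<longrightarrow> emeasure \<mu> A = 0 \<or> emeasure \<mu> A = 1)"

definition full_background :: "'a::metric_space set \<Rightarrow> 'a measure \<Rightarrow> bool" where
  "full_background X \<mu>0 \<longleftrightarrow> (\<exists>\<nu>. borel_prob_on X \<nu> \<and> \<mu>0 = completion \<nu>) \<and>
     (\<forall>U. openin (top_of_set X) U \<and> U \<noteq> {} \<longrightarrow> emeasure \<mu>0 U > 0)"

definition TRAC1 :: "('a::metric_space \<Rightarrow> 'a) \<Rightarrow> 'a set \<Rightarrow> bool" where
  "TRAC1 f X \<longleftrightarrow> finite (basic_sets f X)"

definition TRAC2_with :: "('a::metric_space \<Rightarrow> 'a) \<Rightarrow> 'a set \<Rightarrow> 'a measure \<Rightarrow> nat \<Rightarrow> (nat \<Rightarrow> 'a measure) \<Rightarrow> bool" where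
  "TRAC2_with f X \<mu>0 k \<mu> \<longleftrightarrow> (\<forall>i\<in>{1..k}. ergodic_measure f X (\<mu> i)) \<and>
     (\<exists>N\<in>null_sets \<mu>0. \<forall>x\<in>X - N. \<exists>i\<in>{1..k}. x \<in> Gen f X (\<mu> i))"

end

theory Submission
  imports Defs
begin

lemma chain_in: "eps_chain f X e x y \<Longrightarrow> x \<in> X \<and> y \<in> X"
  unfolding eps_chain_def by (metis le_refl zero_le)

lemma chain_mono: "eps_chain f X e x y \<Longrightarrow> e \<le> e' \<Longrightarrow> eps_chain f X e' x y"
proof -
  assume a: "eps_chain f X e x y" and le: "e \<le> e'"
  obtain n p where n: "n\<ge>1" "p 0 = x" "p n = y" "\<forall>i\<le>n. p i \<in> X" "\<forall>i<n. dist (f (p i)) (p (Suc i)) < e"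
    using a unfolding eps_chain_def by blast
  have "\<forall>i<n. dist (f (p i)) (p (Suc i)) < e'" using n(5) le by (meson less_le_trans)
  then show ?thesis unfolding eps_chain_def using n by blast
qed

lemma chain_concat:
  assumes "eps_chain f X e x y" "eps_chain f X e y z"
  shows "eps_chain f X e x z"
proof -
  obtain n p where n: "n\<ge>1" "p 0 = x" "p n = y" "\<forall>i\<le>n. p i \<in> X" "\<forall>i<n. dist (f (p i)) (p (Suc i)) < e"
    using assms(1) unfolding eps_chain_def by blast
  obtain m q where m: "m\<ge>1" "q 0 = y" "q m = z" "\<forall>i\<le>m. q i \<in> X" "\<forall>i<m. dist (f (q i)) (q (Suc i)) < e"
    using assms(2) unfolding eps_chain_def by blast
  define r where "r i = (if i \<le> n then p i else q (i - n))" for i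
  have "r 0 = x" using n by (simp add: r_def)
  moreover have "r (n+m) = z" using n m by (simp add: r_def)
  moreover have "\<forall>i\<le>n+m. r i \<in> X" using n m by (auto simp: r_def)
  moreover have "\<forall>i<n+m. dist (f (r i)) (r (Suc i)) < e"
  proof (intro allI impI)
    fix i assume i: "i < n+m"
    show "dist (f (r i)) (r (Suc i)) < e"
    proof (cases "Suc i \<le> n")
      case True then show ?thesis using n by (simp add: r_def)
    next
      case False
      then have "i \<ge> n" by simp
      then have "r i = q (i - n)" using n m by (cases "i = n") (auto simp: r_def)
      moreover have "r (Suc i) = q (Suc (i - n))" using False \<open>i\<ge>n\<close> by (simp add: r_def Suc_diff_le)
      ultimately show ?thesis using m i \<open>i\<ge>n\<close> by auto
    qed
  qed
  ultimately show ?thesis unfolding eps_chain_def using n(1) by (intro exI[of _ "n+m"] exI[of _ r]) auto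
qed

lemma chain_step: "x \<in> X \<Longrightarrow> f x \<in> X \<Longrightarrow> e > 0 \<Longrightarrow> eps_chain f X e x (f x)"
  unfolding eps_chain_def
  by (rule exI[of _ 1], rule conjI, simp, rule exI[of _ "\<lambda>i. if i = 0 then x else f x"]) auto

lemma iter_in: "x \<in> X \<Longrightarrow> f ` X \<subseteq> X \<Longrightarrow> (f ^^ n) x \<in> X"
  by (induction n) auto

lemma chain_orbit:
  assumes "x \<in> X" "f ` X \<subseteq> X" "e > 0" "n < m"
  shows "eps_chain f X e ((f^^n) x) ((f^^m) x)"
  using assms(4)
proof (induction m)
  case 0 then show ?case by simp
next
  case (Suc m)
  have st: "eps_chain f X e ((f^^m) x) ((f^^Suc m) x)"
    using chain_step[of "(f^^m) x" X f e] iter_in[OF assms(1,2)] assms by auto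
  show ?case
  proof (cases "n = m")
    case True then show ?thesis using st by simp
  next
    case False then show ?thesis using Suc st chain_concat by (metis less_Suc_eq)
  qed
qed

lemma chain_first:
  assumes "eps_chain f X e a b" "a' \<in> X" "dist (f a') (f a) < d"
  shows "eps_chain f X (e+d) a' b"
proof -
  obtain n p where n: "n\<ge>1" "p 0 = a" "p n = b" "\<forall>i\<le>n. p i \<in> X" "\<forall>i<n. dist (f (p i)) (p (Suc i)) < e"
    using assms(1) unfolding eps_chain_def by blast
  have d0: "d > 0" using assms(3) by (meson le_less_trans zero_le_dist)
  define r where "r = p(0 := a')"
  have "\<forall>i<n. dist (f (r i)) (r (Suc i)) < e + d"
  proof (intro allI impI)
    fix i assume i: "i < n"
    show "dist (f (r i)) (r (Suc i)) < e + d"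
    proof (cases "i = 0")
      case True
      have "dist (f a') (p 1) \<le> dist (f a') (f a) + dist (f a) (p 1)" by (rule dist_triangle)
      moreover have "dist (f (p 0)) (p (Suc 0)) < e" using n i True by auto
      ultimately show ?thesis using True assms(3) n by (simp add: r_def)
    next
      case False then show ?thesis using n i d0 by (simp add: r_def) (smt (verit))
    qed
  qed
  moreover have "r 0 = a'" "r n = b" "\<forall>i\<le>n. r i \<in> X" using n assms(2) by (auto simp: r_def)
  ultimately show ?thesis unfolding eps_chain_def using n(1) by blast
qed

lemma chain_last:
  assumes "eps_chain f X e x y"
  shows "\<exists>z. dist (f z) y < e \<and> (\<forall>e' y'. e \<le> e' \<longrightarrow> y' \<in> X \<longrightarrow> dist (f z) y' < e' \<longrightarrow> eps_chain f X e' x y')"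
proof -
  obtain n p where n: "n\<ge>1" "p 0 = x" "p n = y" "\<forall>i\<le>n. p i \<in> X" "\<forall>i<n. dist (f (p i)) (p (Suc i)) < e"
    using assms(1) unfolding eps_chain_def by blast
  have "dist (f (p (n-1))) y < e" using n by (metis Suc_diff_1 diff_less less_one not_le order_refl le_less_trans zero_less_one less_le_trans)
  moreover have "eps_chain f X e' x y'" if "e \<le> e'" "y' \<in> X" "dist (f (p (n-1))) y' < e'" for e' y'
  proof -
    define r where "r = p(n := y')"
    have "\<forall>i<n. dist (f (r i)) (r (Suc i)) < e'"
    proof (intro allI impI)
      fix i assume i: "i < n"
      show "dist (f (r i)) (r (Suc i)) < e'"
      proof (cases "Suc i = n")
        case True then have "i = n - 1" by simp
        then show ?thesis using True i that by (simp add: r_def)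
      next
        case False then show ?thesis using n i that by (simp add: r_def) (meson less_le_trans)
      qed
    qed
    moreover have "r 0 = x" "r n = y'" "\<forall>i\<le>n. r i \<in> X" using n that by (auto simp: r_def)
    ultimately show ?thesis unfolding eps_chain_def using n(1) by blast
  qed
  ultimately show ?thesis by blast
qed


lemma supp_sub_omega:
  assumes inv: "invariant_measure f X \<mu>" and x: "x \<in> Gen f X \<mu>"
  shows "supp X \<mu> \<subseteq> omega_limit f x"
proof
  fix y assume y: "y \<in> supp X \<mu>"
  show "y \<in> omega_limit f x"
  proof (rule ccontr)
    assume "y \<notin> omega_limit f x"
    then obtain e N where e: "e > 0" and far: "\<forall>n\<ge>N. dist ((f^^n) x) y \<ge> e"
      unfolding omega_limit_def by (auto simp: not_less)
    define u where "u z = max 0 (e - dist z y)" for z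
    have cu: "continuous_on UNIV u" unfolding u_def by (intro continuous_intros)
    then have cuX: "continuous_on X u" using continuous_on_subset by blast
    have lim: "(\<lambda>n. (\<Sum>i<n. u ((f^^i) x)) / real n) \<longlonglongrightarrow> integral\<^sup>L \<mu> u"
      using x cuX unfolding Gen_def by auto
    have eq: "(\<Sum>i<n. u ((f^^i) x)) = (\<Sum>i<N. u ((f^^i) x))" if "n \<ge> N" for n
      using that
    proof (induction n rule: dec_induct)
      case base then show ?case by simp
    next
      case (step n)
      have "u ((f^^n) x) = 0" using far step(1) by (auto simp: u_def)
      then show ?case using step by simp
    qed
    have "(\<lambda>n. (\<Sum>i<N. u ((f^^i) x)) / real n) \<longlonglongrightarrow> 0" by (rule lim_const_over_n)
    moreover have "\<forall>\<^sub>F n in sequentially. (\<Sum>i<N. u ((f^^i) x)) / real n = (\<Sum>i<n. u ((f^^i) x)) / real n"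
      using eq eventually_at_top_linorder by (metis (mono_tags, lifting))
    ultimately have "(\<lambda>n. (\<Sum>i<n. u ((f^^i) x)) / real n) \<longlonglongrightarrow> 0" by (rule Lim_transform_eventually)
    then have int0: "integral\<^sup>L \<mu> u = 0" using lim LIMSEQ_unique by blast
    have bp: "prob_space \<mu>" "space \<mu> = X" "sets \<mu> = sets (restrict_space borel X)"
      using inv unfolding invariant_measure_def borel_prob_on_def by auto
    have "u \<in> borel_measurable (restrict_space borel X)"
      by (rule measurable_restrict_space1) (rule borel_measurable_continuous_onI[OF cu])
    then have meas: "u \<in> borel_measurable \<mu>" using measurable_cong_sets[OF bp(3) refl] by blast
    interpret prob_space \<mu> by (rule bp(1))
    have intg: "integrable \<mu> u"
      by (rule integrable_const_bound[where B=e]) (use e in \<open>auto simp: u_def meas\<close>)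
    have "AE z in \<mu>. u z = 0"
      using integral_nonneg_eq_0_iff_AE[OF intg] int0 by (auto simp: u_def)
    then obtain M where M: "{z\<in>space \<mu>. \<not> u z = 0} \<subseteq> M" "emeasure \<mu> M = 0" "M \<in> sets \<mu>"
      by (auto elim: AE_E)
    have "ball y e \<inter> X \<subseteq> M"
    proof
      fix z assume "z \<in> ball y e \<inter> X"
      then have "u z \<noteq> 0" "z \<in> space \<mu>" using bp by (auto simp: u_def dist_commute)
      then show "z \<in> M" using M by auto
    qed
    then have "emeasure \<mu> (ball y e \<inter> X) \<le> 0" using M emeasure_mono by metis
    moreover have "emeasure \<mu> (ball y e \<inter> X) > 0" using y e unfolding supp_def by auto
    ultimately show False by simp
  qed
qed


lemma chain_reach_trans: "chain_reach f X x y \<Longrightarrow> chain_reach f X y z \<Longrightarrow> chain_reach f X x z"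
  unfolding chain_reach_def using chain_concat by blast

lemma omega_in_X:
  assumes "compact X" "x \<in> X" "f ` X \<subseteq> X"
  shows "omega_limit f x \<subseteq> X"
proof
  fix y assume y: "y \<in> omega_limit f x"
  have "\<forall>\<epsilon>>0. \<exists>z\<in>X. dist z y < \<epsilon>"
  proof (intro allI impI)
    fix \<epsilon> :: real assume "\<epsilon> > 0"
    then obtain n where "dist ((f^^n) x) y < \<epsilon>" using y unfolding omega_limit_def by blast
    then show "\<exists>z\<in>X. dist z y < \<epsilon>" using iter_in[OF assms(2,3)] by blast
  qed
  then show "y \<in> X" using closed_approachable[OF compact_imp_closed[OF assms(1)]] by blast
qed

lemma omega_cr:
  assumes "compact X" "continuous_on X f" "f ` X \<subseteq> X" "x \<in> X" "y \<in> omega_limit f x"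
  shows "chain_reach f X y y"
proof -
  have yX: "y \<in> X" using omega_in_X assms by blast
  have c4: "eps_chain f X (4*e) y y" if e: "e > 0" for e
  proof -
    obtain d where d: "d > 0" "\<forall>x'\<in>X. dist x' y < d \<longrightarrow> dist (f x') (f y) < e"
      using assms(2) yX e unfolding continuous_on_iff by blast
    obtain n where n: "n \<ge> 1" "dist ((f^^n) x) y < d" using assms(5) d(1) unfolding omega_limit_def by blast
    obtain m where m: "m \<ge> Suc n" "dist ((f^^m) x) y < e" using assms(5) e unfolding omega_limit_def by blast
    have "eps_chain f X e ((f^^n) x) ((f^^m) x)" using chain_orbit[OF assms(4,3) e] m(1) by (simp add: Suc_le_eq)
    moreover have "dist (f y) (f ((f^^n) x)) < e" using d(2) n(2) iter_in[OF assms(4,3)] by (metis dist_commute)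
    ultimately have "eps_chain f X (e+e) y ((f^^m) x)" using chain_first yX by blast
    then obtain z where z: "dist (f z) ((f^^m) x) < e + e"
      "\<forall>e' y'. e + e \<le> e' \<longrightarrow> y' \<in> X \<longrightarrow> dist (f z) y' < e' \<longrightarrow> eps_chain f X e' y y'"
      using chain_last by blast
    have "dist (f z) y \<le> dist (f z) ((f^^m) x) + dist ((f^^m) x) y" by (rule dist_triangle)
    then have "dist (f z) y < 4*e" using z(1) m(2) e by linarith
    then show ?thesis using z(2) yX e by auto
  qed
  show ?thesis unfolding chain_reach_def
  proof (intro allI impI)
    fix e :: real assume "e > 0"
    then show "eps_chain f X e y y" using c4[of "e/4"] by simp
  qed
qed

lemma fin_eps:
  assumes "finite F" "\<forall>C\<in>F. \<exists>\<epsilon>>0. P C \<epsilon>"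
    and mono: "\<And>C \<epsilon> \<epsilon>'. P C \<epsilon> \<Longrightarrow> 0 < \<epsilon>' \<Longrightarrow> \<epsilon>' \<le> \<epsilon> \<Longrightarrow> P C \<epsilon>'"
  shows "\<exists>\<epsilon>>0. \<forall>C\<in>F. P C (\<epsilon>::real)"
  using assms(1,2)
proof (induction F rule: finite_induct)
  case empty then show ?case using zero_less_one by blast
next
  case (insert C F)
  then obtain e1 where e1: "e1 > 0" "\<forall>C\<in>F. P C e1" by blast
  obtain e2 where e2: "e2 > 0" "P C e2" using insert by blast
  show ?case using e1 e2 mono by (intro exI[of _ "min e1 e2"]) auto
qed

lemma terminal_visible:
  assumes cX: "compact X" and cf: "continuous_on X f" and fX: "f ` X \<subseteq> X"
    and T1: "TRAC1 f X" and B: "B \<in> basic_sets f X" and trm: "terminal f X B"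
  shows "visible f X B"
proof -
  define cls where "cls c = {y \<in> chain_recurrent f X. chain_reach f X c y \<and> chain_reach f X y c}" for c
  have bs: "basic_sets f X = cls ` chain_recurrent f X" unfolding basic_sets_def cls_def by auto
  obtain b0 where b0: "b0 \<in> chain_recurrent f X" "B = cls b0" using B bs by auto
  have b0X: "b0 \<in> X" and b0r: "chain_reach f X b0 b0" using b0 unfolding chain_recurrent_def by auto
  have b0B: "b0 \<in> B" using b0 b0r unfolding cls_def by auto
  have key: "\<forall>C\<in>basic_sets f X - {B}. \<exists>\<epsilon>>0. \<forall>w\<in>C. \<not> eps_chain f X \<epsilon> b0 w"
  proof
    fix C assume C: "C \<in> basic_sets f X - {B}"
    then obtain c where c: "c \<in> chain_recurrent f X" "C = cls c" using bs by auto
    show "\<exists>\<epsilon>>0. \<forall>w\<in>C. \<not> eps_chain f X \<epsilon> b0 w"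
    proof (rule ccontr)
      assume "\<not> ?thesis"
      then have all: "\<forall>\<epsilon>>0. \<exists>w\<in>C. eps_chain f X \<epsilon> b0 w" by auto
      have "chain_reach f X b0 c" unfolding chain_reach_def
      proof (intro allI impI)
        fix \<epsilon> :: real assume "\<epsilon> > 0"
        then obtain w where w: "w \<in> C" "eps_chain f X \<epsilon> b0 w" using all by blast
        then have "chain_reach f X w c" using c unfolding cls_def by auto
        then show "eps_chain f X \<epsilon> b0 c" using w chain_concat \<open>\<epsilon>>0\<close> unfolding chain_reach_def by blast
      qed
      then have "c \<in> B" using trm b0B unfolding terminal_def by blast
      then have "chain_reach f X c b0" using b0 unfolding cls_def by auto
      then have "cls c = cls b0" using \<open>chain_reach f X b0 c\<close> unfolding cls_def
        using chain_reach_trans by blast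
      then show False using C c b0 by auto
    qed
  qed
  have fin: "finite (basic_sets f X - {B})" using T1 unfolding TRAC1_def by auto
  obtain \<epsilon>0 where e0: "\<epsilon>0 > 0" "\<forall>C\<in>basic_sets f X - {B}. \<forall>w\<in>C. \<not> eps_chain f X \<epsilon>0 b0 w"
  proof -
    have "\<exists>\<epsilon>>0. \<forall>C\<in>basic_sets f X - {B}. \<forall>w\<in>C. \<not> eps_chain f X \<epsilon> b0 w"
      by (rule fin_eps[OF fin key]) (meson chain_mono)
    then show ?thesis using that by blast
  qed
  define R where "R = {y. eps_chain f X (\<epsilon>0/2) b0 y}"
  have RX: "R \<subseteq> X" unfolding R_def using chain_in by blast
  have Rne: "f b0 \<in> R" unfolding R_def using chain_step[of b0 X f "\<epsilon>0/2"] b0X fX e0(1) by auto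
  have Ropen: "openin (top_of_set X) R"
    unfolding openin_euclidean_subtopology_iff
  proof (intro conjI ballI RX)
    fix y assume "y \<in> R"
    then obtain z where z: "dist (f z) y < \<epsilon>0/2"
      "\<forall>e' y'. \<epsilon>0/2 \<le> e' \<longrightarrow> y' \<in> X \<longrightarrow> dist (f z) y' < e' \<longrightarrow> eps_chain f X e' b0 y'"
      unfolding R_def using chain_last by blast
    show "\<exists>e>0. \<forall>x'\<in>X. dist x' y < e \<longrightarrow> x' \<in> R"
    proof (intro exI[of _ "\<epsilon>0/2 - dist (f z) y"] conjI ballI impI)
      show "\<epsilon>0/2 - dist (f z) y > 0" using z by simp
      fix x' assume "x' \<in> X" "dist x' y < \<epsilon>0/2 - dist (f z) y"
      moreover have "dist (f z) x' \<le> dist (f z) y + dist x' y" by (metis dist_triangle dist_commute)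
      ultimately show "x' \<in> R" using z(2) unfolding R_def by fastforce
    qed
  qed
  have Rsub: "R \<subseteq> {x \<in> X. omega_limit f x \<subseteq> B}"
  proof
    fix x assume xR: "x \<in> R"
    then have xX: "x \<in> X" using RX by auto
    have orb: "(f^^n) x \<in> R" for n
    proof (induction n)
      case 0 then show ?case using xR by simp
    next
      case (Suc n)
      have i1: "(f^^n) x \<in> X" by (rule iter_in[OF xX fX])
      then have i2: "f ((f^^n) x) \<in> X" using fX by blast
      have "eps_chain f X (\<epsilon>0/2) ((f^^n) x) ((f^^Suc n) x)"
        using chain_step[of "(f^^n) x" X f "\<epsilon>0/2", OF i1 i2] e0(1) by simp
      moreover have "eps_chain f X (\<epsilon>0/2) b0 ((f^^n) x)" using Suc unfolding R_def by simp
      ultimately show ?case unfolding R_def using chain_concat by (metis mem_Collect_eq)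
    qed
    have "omega_limit f x \<subseteq> B"
    proof
      fix y assume y: "y \<in> omega_limit f x"
      have yX: "y \<in> X" using omega_in_X[OF cX xX fX] y by blast
      have yr: "chain_reach f X y y" by (rule omega_cr[OF cX cf fX xX y])
      then have ycr: "y \<in> chain_recurrent f X" using yX unfolding chain_recurrent_def by auto
      have yc: "y \<in> cls y" using ycr yr unfolding cls_def by auto
      have "\<epsilon>0/2 > 0" using e0(1) by simp
      then obtain n where n: "dist ((f^^n) x) y < \<epsilon>0/2" using y unfolding omega_limit_def
        by blast
      obtain z where z: "dist (f z) ((f^^n) x) < \<epsilon>0/2"
        "\<forall>e' y'. \<epsilon>0/2 \<le> e' \<longrightarrow> y' \<in> X \<longrightarrow> dist (f z) y' < e' \<longrightarrow> eps_chain f X e' b0 y'"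
        using orb[of n] chain_last unfolding R_def by blast
      have "dist (f z) y \<le> dist (f z) ((f^^n) x) + dist ((f^^n) x) y" by (rule dist_triangle)
      then have "dist (f z) y < \<epsilon>0" using z(1) n by linarith
      then have ch: "eps_chain f X \<epsilon>0 b0 y" using z(2) yX e0(1) by auto
      have "cls y \<in> basic_sets f X" using bs ycr by auto
      then have "cls y = B" using e0(2) ch yc by blast
      then show "y \<in> B" using yc by simp
    qed
    then show "x \<in> {x \<in> X. omega_limit f x \<subseteq> B}" using xX by simp
  qed
  have "R \<subseteq> basin f X B" unfolding basin_def by (rule interior_of_maximal[OF Rsub Ropen])
  then show ?thesis unfolding visible_def using Rne by blast
qed


lemma part1:
  assumes fb: "full_background X \<mu>0" and T2: "TRAC2_with f X \<mu>0 k \<mu>"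
  shows "basin f X B \<subseteq> closure (basin f X B \<inter> (\<Union>{Gen f X (\<mu> i) | i. i \<in> {1..k} \<and> supp X (\<mu> i) \<subseteq> B}))"
proof
  fix z assume z: "z \<in> basin f X B"
  obtain N where N: "N \<in> null_sets \<mu>0" "\<forall>x\<in>X - N. \<exists>i\<in>{1..k}. x \<in> Gen f X (\<mu> i)"
    using T2 unfolding TRAC2_with_def by blast
  have erg: "\<forall>i\<in>{1..k}. ergodic_measure f X (\<mu> i)" using T2 unfolding TRAC2_with_def by blast
  have bo: "openin (top_of_set X) (basin f X B)" unfolding basin_def by simp
  have bs: "basin f X B \<subseteq> {x \<in> X. omega_limit f x \<subseteq> B}" unfolding basin_def by (rule interior_of_subset)
  show "z \<in> closure (basin f X B \<inter> (\<Union>{Gen f X (\<mu> i) | i. i \<in> {1..k} \<and> supp X (\<mu> i) \<subseteq> B}))"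
    unfolding closure_approachable
  proof (intro allI impI)
    fix e :: real assume e: "e > 0"
    define U where "U = basin f X B \<inter> ball z e"
    have Uo: "openin (top_of_set X) U" unfolding U_def using bo by (simp add: openin_Int_open)
    have "z \<in> U" unfolding U_def using z e by simp
    then have "emeasure \<mu>0 U > 0" using fb Uo unfolding full_background_def by blast
    moreover have "emeasure \<mu>0 N = 0" "N \<in> sets \<mu>0" using N(1) by auto
    ultimately have "\<not> U \<subseteq> N" using emeasure_mono by (metis not_le order_refl)
    then obtain x where x: "x \<in> U" "x \<notin> N" by blast
    have xb: "x \<in> basin f X B" and xd: "dist x z < e" using x unfolding U_def by (auto simp: dist_commute)
    have xX: "x \<in> X" and om: "omega_limit f x \<subseteq> B" using bs xb by auto
    obtain i where i: "i \<in> {1..k}" "x \<in> Gen f X (\<mu> i)" using N(2) xX x(2) by blast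
    have "invariant_measure f X (\<mu> i)" using erg i(1) unfolding ergodic_measure_def by blast
    then have "supp X (\<mu> i) \<subseteq> B" using supp_sub_omega i(2) om by blast
    then have "Gen f X (\<mu> i) \<in> {Gen f X (\<mu> i) | i. i \<in> {1..k} \<and> supp X (\<mu> i) \<subseteq> B}"
      using i(1) by blast
    then have "x \<in> basin f X B \<inter> (\<Union>{Gen f X (\<mu> i) | i. i \<in> {1..k} \<and> supp X (\<mu> i) \<subseteq> B})"
      using xb i(2) by (intro IntI UnionI)
    then show "\<exists>y\<in>basin f X B \<inter> (\<Union>{Gen f X (\<mu> i) | i. i \<in> {1..k} \<and> supp X (\<mu> i) \<subseteq> B}). dist y z < e"
      using xd by blast
  qed
qed

theorem lemma2p5:
  fixes X :: "'a::metric_space set" and f :: "'a \<Rightarrow> 'a" and \<mu>0 :: "'a measure"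
    and k :: nat and \<mu> :: "nat \<Rightarrow> 'a measure"
  assumes "compact X" and "continuous_on X f" and "f ` X \<subseteq> X"
    and "full_background X \<mu>0"
    and "TRAC1 f X"
    and "TRAC2_with f X \<mu>0 k \<mu>"
  shows "(\<forall>B\<in>basic_sets f X. visible f X B \<longrightarrow>
            (\<exists>i\<in>{1..k}. supp X (\<mu> i) \<subseteq> B) \<and>
            basin f X B \<subseteq> closure (basin f X B \<inter> (\<Union>{Gen f X (\<mu> i) | i. i \<in> {1..k} \<and> supp X (\<mu> i) \<subseteq> B})))
       \<and> (\<forall>B\<in>basic_sets f X. terminal f X B \<longrightarrow> (\<exists>i\<in>{1..k}. supp X (\<mu> i) \<subseteq> B))"
proof -
  have vis: "(\<exists>i\<in>{1..k}. supp X (\<mu> i) \<subseteq> B) \<and>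
            basin f X B \<subseteq> closure (basin f X B \<inter> (\<Union>{Gen f X (\<mu> i) | i. i \<in> {1..k} \<and> supp X (\<mu> i) \<subseteq> B}))"
    if "visible f X B" for B
  proof
    have sub: "basin f X B \<subseteq> closure (basin f X B \<inter> (\<Union>{Gen f X (\<mu> i) | i. i \<in> {1..k} \<and> supp X (\<mu> i) \<subseteq> B}))"
      by (rule part1[OF assms(4,6)])
    then show "basin f X B \<subseteq> closure (basin f X B \<inter> (\<Union>{Gen f X (\<mu> i) | i. i \<in> {1..k} \<and> supp X (\<mu> i) \<subseteq> B}))" .
    have "closure (basin f X B \<inter> (\<Union>{Gen f X (\<mu> i) | i. i \<in> {1..k} \<and> supp X (\<mu> i) \<subseteq> B})) \<noteq> {}"
      using sub that unfolding visible_def by auto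
    then have "basin f X B \<inter> (\<Union>{Gen f X (\<mu> i) | i. i \<in> {1..k} \<and> supp X (\<mu> i) \<subseteq> B}) \<noteq> {}"
      by (metis closure_empty)
    then obtain x where "x \<in> \<Union>{Gen f X (\<mu> i) | i. i \<in> {1..k} \<and> supp X (\<mu> i) \<subseteq> B}" by blast
    then obtain G where "G \<in> {Gen f X (\<mu> i) | i. i \<in> {1..k} \<and> supp X (\<mu> i) \<subseteq> B}" by (rule UnionE)
    then show "\<exists>i\<in>{1..k}. supp X (\<mu> i) \<subseteq> B" by auto
  qed
  show ?thesis
  proof (rule conjI; intro ballI impI)
    fix B assume "B \<in> basic_sets f X" "visible f X B"
    then show "(\<exists>i\<in>{1..k}. supp X (\<mu> i) \<subseteq> B) \<and>
            basin f X B \<subseteq> closure (basin f X B \<inter> (\<Union>{Gen f X (\<mu> i) | i. i \<in> {1..k} \<and> supp X (\<mu> i) \<subseteq> B}))"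
      using vis by blast
  next
    fix B assume "B \<in> basic_sets f X" "terminal f X B"
    then have "visible f X B" using terminal_visible[OF assms(1,2,3,5)] by blast
    then show "\<exists>i\<in>{1..k}. supp X (\<mu> i) \<subseteq> B" using vis by blast
  qed
qed

end
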